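(* Let $A$ generate a strongly continuous semigroup on a Banach space $X$ and let $\alpha\in\mathbb{R}$. Assume that for every $x\in\operatorname{Dom}(A)$ there is a constant $c_x$ with $\|e^{At}x\|_{\operatorname{Dom}(A)}\le c_xe^{\alpha t}$ for all $t\ge0$. Then there is a constant $c$ with $\|e^{At}\|_{X\to X}\le ce^{\alpha t}$ for all $t\ge0$.
   Context: $\|\cdot\|_{\operatorname{Dom}(A)}$ denotes the graph norm of $A$. *)

theory Defs
  imports "HOL-Analysis.Analysis"
begin

definition C0_semigroup :: "(real \<Rightarrow> ('a::banach \<Rightarrow>\<^sub>L 'a)) \<Rightarrow> bool" where
  "C0_semigroup T \<longleftrightarrow>
     T 0 = id_blinfun \<and>
     (\<forall>s t. 0 \<le> s \<longrightarrow> 0 \<le> t \<longrightarrow> T (s + t) = T s o\<^sub>L T t) \<and>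
     (\<forall>x. ((\<lambda>t. blinfun_apply (T t) x) \<longlongrightarrow> x) (at_right 0))"

definition generator :: "(real \<Rightarrow> ('a::banach \<Rightarrow>\<^sub>L 'a)) \<Rightarrow> 'a set \<Rightarrow> ('a \<Rightarrow> 'a) \<Rightarrow> bool" where
  "generator T D A \<longleftrightarrow>
     D = {x. \<exists>y. ((\<lambda>h. (1 / h) *\<^sub>R (blinfun_apply (T h) x - x)) \<longlongrightarrow> y) (at_right 0)} \<and>
     (\<forall>x\<in>D. ((\<lambda>h. (1 / h) *\<^sub>R (blinfun_apply (T h) x - x)) \<longlongrightarrow> A x) (at_right 0))"

definition graph_norm :: "('a::real_normed_vector \<Rightarrow> 'a) \<Rightarrow> 'a \<Rightarrow> real" where
  "graph_norm A x = norm x + norm (A x)"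

end

theory Submission
  imports Defs
begin


lemma ubp:
  fixes F :: "'i \<Rightarrow> ('a::banach \<Rightarrow>\<^sub>L 'b::real_normed_vector)"
  assumes pb: "\<And>x. \<exists>c. \<forall>i\<in>I. norm (blinfun_apply (F i) x) \<le> c"
  shows "\<exists>C. \<forall>i\<in>I. norm (F i) \<le> C"
proof -
  define E where "E n = {x. \<forall>i\<in>I. norm (blinfun_apply (F i) x) \<le> real n}" for n :: nat
  have clE: "closed (E n)" for n
  proof -
    have "E n = (\<Inter>i\<in>I. {x. norm (blinfun_apply (F i) x) \<le> real n})"
      by (auto simp: E_def)
    moreover have "closed {x. norm (blinfun_apply (F i) x) \<le> real n}" for i
      by (intro closed_Collect_le continuous_intros)
    ultimately show ?thesis by auto
  qed
  have UE: "\<Union>(range E) = UNIV"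
  proof -
    have "x \<in> \<Union>(range E)" for x :: 'a
    proof -
    obtain c where c: "\<forall>i\<in>I. norm (blinfun_apply (F i) x) \<le> c" using pb by blast
    obtain n :: nat where "c \<le> real n" using real_arch_simple by blast
    then have "x \<in> E n" using c by (auto simp: E_def intro: order_trans)
    then show "x \<in> \<Union>(range E)" by blast
    qed
    then show ?thesis by auto
  qed
  have "\<exists>n. interior (E n) \<noteq> {}"
  proof (rule ccontr)
    assume "\<not> ?thesis"
    then have "euclidean interior_of \<Union>(range E) = {}"
      by (intro Baire_category_alt) (auto simp: completely_metrizable_space_euclidean clE)
    then show False using UE by simp
  qed
  then obtain n x0 where "x0 \<in> interior (E n)" by blast
  then obtain r where r: "r > 0" "ball x0 r \<subseteq> E n"
    using open_contains_ball_eq open_interior interior_subset by (meson order_trans)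
  have "norm (F i) \<le> 4 * real n / r" if i: "i \<in> I" for i
  proof (rule norm_blinfun_bound)
    show "0 \<le> 4 * real n / r" using r by simp
    fix y :: 'a
    show "norm (blinfun_apply (F i) y) \<le> 4 * real n / r * norm y"
    proof (cases "y = 0")
      case True then show ?thesis by simp
    next
      case False
      define z where "z = (r / 2 / norm y) *\<^sub>R y"
      have nz: "norm z = r / 2" using False r by (simp add: z_def)
      have "x0 \<in> E n" using r by auto
      moreover have "x0 + z \<in> E n" using r nz by (intro subsetD[OF r(2)]) (simp add: dist_norm)
      ultimately have b1: "norm (F i x0) \<le> real n" and b2: "norm (F i (x0 + z)) \<le> real n"
        using i by (auto simp: E_def)
      have "F i z = F i (x0 + z) - F i x0" by (simp add: blinfun.add_right)
      then have fz: "norm (F i z) \<le> 2 * real n" using b1 b2 norm_triangle_ineq4[of "F i (x0 + z)" "F i x0"] by simp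
      have "y = (2 * norm y / r) *\<^sub>R z" using False r by (simp add: z_def)
      then have "F i y = (2 * norm y / r) *\<^sub>R F i z" by (metis blinfun.scaleR_right)
      then have "norm (F i y) = (2 * norm y / r) * norm (F i z)" using r by simp
      also have "\<dots> \<le> (2 * norm y / r) * (2 * real n)" using fz r by (intro mult_left_mono) auto
      also have "\<dots> = 4 * real n / r * norm y" by simp
      finally show ?thesis .
    qed
  qed
  then show ?thesis by blast
qed



locale sg =
  fixes T :: "real \<Rightarrow> ('a::banach \<Rightarrow>\<^sub>L 'a)"
  assumes C0: "C0_semigroup T"
begin

lemma T0: "T 0 = id_blinfun" using C0 by (simp add: C0_semigroup_def)

lemma Tadd: "0 \<le> s \<Longrightarrow> 0 \<le> t \<Longrightarrow> T (s + t) = T s o\<^sub>L T t"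
  using C0 by (simp add: C0_semigroup_def)

lemma Tlim: "((\<lambda>t. blinfun_apply (T t) x) \<longlongrightarrow> x) (at_right 0)"
  using C0 by (simp add: C0_semigroup_def)

lemma Tadd_app: "0 \<le> s \<Longrightarrow> 0 \<le> t \<Longrightarrow> T (s + t) x = T s (T t x)"
  by (simp add: Tadd)

lemma Tcomm: "0 \<le> s \<Longrightarrow> 0 \<le> t \<Longrightarrow> T s (T t x) = T t (T s x)"
  by (metis Tadd_app add.commute)

lemma Tcont0: "continuous (at 0 within {0..}) (\<lambda>t. blinfun_apply (T t) x)"
proof -
  have "at (0::real) within {0..} = at_right 0"
  proof -
    have "{0::real..} - {0} = {0<..}" by auto
    then show ?thesis unfolding at_within_def by simp
  qed
  then show ?thesis using Tlim[of x] by (simp add: continuous_within T0)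
qed

lemma localbd: "\<exists>d>0. \<exists>M. \<forall>t. 0 \<le> t \<and> t \<le> d \<longrightarrow> norm (T t) \<le> M"
proof (rule ccontr)
  assume H: "\<not> ?thesis"
  have "\<exists>t. 0 \<le> t \<and> t \<le> inverse (real (Suc n)) \<and> real n < norm (T t)" for n
  proof -
    have "inverse (real (Suc n)) > 0" by simp
    then show ?thesis using H by (meson not_le)
  qed
  then obtain s where s: "\<And>n. 0 \<le> s n \<and> s n \<le> inverse (real (Suc n)) \<and> real n < norm (T (s n))"
    by metis
  have s0: "s \<longlonglongrightarrow> 0"
    by (rule tendsto_sandwich[OF _ _ tendsto_const LIMSEQ_inverse_real_of_nat]) (use s in auto)
  have "\<exists>c. \<forall>n\<in>UNIV. norm (blinfun_apply (T (s n)) x) \<le> c" for x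
  proof -
    have "((\<lambda>t. blinfun_apply (T t) x) \<circ> s) \<longlonglongrightarrow> T 0 x"
      using Tcont0[of x] s0 s unfolding continuous_within_sequentially by auto
    then have "Bseq ((\<lambda>t. blinfun_apply (T t) x) \<circ> s)"
      using convergent_imp_Bseq convergent_def by blast
    then show ?thesis unfolding Bseq_def by auto
  qed
  then obtain C where C: "\<And>n. norm (T (s n)) \<le> C" using ubp[of UNIV "\<lambda>n. T (s n)"] by auto
  obtain n where "C \<le> real n" using real_arch_simple by blast
  then show False using C[of n] s[of n] by linarith
qed

lemma bd: "\<exists>M\<ge>1. \<forall>t. 0 \<le> t \<and> t \<le> b \<longrightarrow> norm (T t) \<le> M"
proof -
  obtain d M0 where d: "d > 0" and M0: "\<And>t. 0 \<le> t \<Longrightarrow> t \<le> d \<Longrightarrow> norm (T t) \<le> M0"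
    using localbd by blast
  define M where "M = max 1 M0"
  have M1: "M \<ge> 1" by (simp add: M_def)
  have Mb: "0 \<le> t \<Longrightarrow> t \<le> d \<Longrightarrow> norm (T t) \<le> M" for t using M0[of t] by (simp add: M_def)
  have ind: "\<forall>t. 0 \<le> t \<and> t \<le> real n * d \<longrightarrow> norm (T t) \<le> M ^ (n+1)" for n
  proof (induction n)
    case 0
    then show ?case using Mb d by auto
  next
    case (Suc n)
    show ?case
    proof (intro allI impI)
      fix t assume t: "0 \<le> t \<and> t \<le> real (Suc n) * d"
      show "norm (T t) \<le> M ^ (Suc n + 1)"
      proof (cases "t \<le> d")
        case True
        then have "norm (T t) \<le> M" using Mb t by auto
        also have "M \<le> M ^ (Suc n + 1)" using power_increasing[of 1 "Suc n + 1" M] M1 by simp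
        finally show ?thesis .
      next
        case False
        have "T t = T d o\<^sub>L T (t - d)" using Tadd[of d "t - d"] False d by simp
        then have "norm (T t) \<le> norm (T d) * norm (T (t - d))" by (metis norm_blinfun_compose)
        also have "\<dots> \<le> M * M ^ (n + 1)"
          using Suc.IH[rule_format, of "t - d"] Mb[of d] d False t M1
          by (intro mult_mono) (auto simp: algebra_simps)
        finally show ?thesis by simp
      qed
    qed
  qed
  obtain n :: nat where "b / d \<le> real n" using real_arch_simple by blast
  then have "b \<le> real n * d" using d by (simp add: field_simps)
  then have "\<forall>t. 0 \<le> t \<and> t \<le> b \<longrightarrow> norm (T t) \<le> M ^ (n+1)" using ind[of n] by auto
  moreover have "M ^ (n+1) \<ge> 1" using M1 one_le_power by blast
  ultimately show ?thesis by blast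
qed

lemma Tcont: "continuous_on {0..} (\<lambda>t. blinfun_apply (T t) x)"
  unfolding continuous_on_iff
proof (intro ballI allI impI)
  fix t e :: real assume t: "t \<in> {0..}" and e: "0 < e"
  obtain M where M: "M \<ge> 1" "\<And>s. 0 \<le> s \<Longrightarrow> s \<le> t + 1 \<Longrightarrow> norm (T s) \<le> M"
    using bd[of "t+1"] by blast
  have "\<forall>\<^sub>F h in at_right 0. dist (blinfun_apply (T h) x) x < e / M"
    using Tlim[of x] e M(1) by (simp add: tendsto_iff)
  then obtain d0 where d0: "d0 > 0" "\<And>h. 0 < h \<Longrightarrow> h < d0 \<Longrightarrow> dist (blinfun_apply (T h) x) x < e / M"
    by (auto simp: eventually_at_right[OF zero_less_one])
  show "\<exists>d>0. \<forall>s\<in>{0..}. dist s t < d \<longrightarrow> dist (blinfun_apply (T s) x) (blinfun_apply (T t) x) < e"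
  proof (intro exI[of _ "min d0 1"] conjI ballI impI)
    show "0 < min d0 1" using d0 by simp
    fix s :: real assume s: "s \<in> {0..}" and ds: "dist s t < min d0 1"
    define u where "u = min s t"
    define v where "v = max s t"
    have key: "dist (blinfun_apply (T s) x) (blinfun_apply (T t) x) = norm (T v x - T u x)"
      by (cases "s \<le> t") (auto simp: u_def v_def dist_norm norm_minus_commute)
    show "dist (blinfun_apply (T s) x) (blinfun_apply (T t) x) < e"
    proof (cases "u = v")
      case True then show ?thesis using key e by simp
    next
      case False
      have uv: "0 \<le> u" "u < v" "v - u < d0" "u \<le> t + 1"
        using s t ds False by (auto simp: u_def v_def dist_real_def)
      have "T v x - T u x = T u (T (v - u) x - x)"
        using Tadd_app[of u "v - u" x] uv by (simp add: blinfun.diff_right)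
      then have "norm (T v x - T u x) \<le> norm (T u) * norm (T (v - u) x - x)"
        by (metis norm_blinfun)
      also have "\<dots> \<le> M * norm (T (v - u) x - x)"
        using M(2)[of u] uv by (intro mult_right_mono) auto
      also have "\<dots> < M * (e / M)"
        using d0(2)[of "v - u"] uv M(1) by (intro mult_strict_left_mono) (auto simp: dist_norm)
      also have "\<dots> = e" using M(1) by simp
      finally show ?thesis using key by simp
    qed
  qed
qed

end


lemma vd_quot:
  fixes f :: "real \<Rightarrow> 'b::real_normed_vector"
  assumes "(f has_vector_derivative f') (at 0 within {0..1})"
  shows "((\<lambda>h. (1/h) *\<^sub>R (f h - f 0)) \<longlongrightarrow> f') (at_right 0)"
proof -
  have F: "at (0::real) within {0..1} = at_right 0" by (rule at_within_Icc_at_right) simp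
  from assms[unfolded has_vector_derivative_def has_derivative_within]
  have "((\<lambda>y. (1 / norm (y - 0)) *\<^sub>R (f y - (f 0 + (y - 0) *\<^sub>R f'))) \<longlongrightarrow> 0) (at_right 0)"
    unfolding F by blast
  moreover have "\<forall>\<^sub>F y in at_right 0. (1 / norm (y - 0)) *\<^sub>R (f y - (f 0 + (y - 0) *\<^sub>R f'))
      = (1/y) *\<^sub>R (f y - f 0) - f'"
    using eventually_at_right_less[of "0::real"]
    by eventually_elim (auto simp: scaleR_diff_right scaleR_add_right)
  ultimately have "((\<lambda>y. (1/y) *\<^sub>R (f y - f 0) - f') \<longlongrightarrow> 0) (at_right 0)"
    using tendsto_cong by fastforce
  then show ?thesis by (simp add: LIM_zero_iff)
qed

context sg begin

lemma gen_comm: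
  assumes G: "generator T D A" and y: "y \<in> D" and t: "0 \<le> t"
  shows "T t y \<in> D \<and> A (T t y) = T t (A y)"
proof -
  have L: "((\<lambda>h. (1/h) *\<^sub>R (T h y - y)) \<longlongrightarrow> A y) (at_right 0)" using G y by (auto simp: generator_def)
  have "((\<lambda>h. T t ((1/h) *\<^sub>R (T h y - y))) \<longlongrightarrow> T t (A y)) (at_right 0)"
    by (rule bounded_linear.tendsto[OF blinfun.bounded_linear_right L])
  moreover have "\<forall>\<^sub>F h in at_right 0. T t ((1/h) *\<^sub>R (T h y - y)) = (1/h) *\<^sub>R (T h (T t y) - T t y)"
    using eventually_at_right_less[of "0::real"]
    by eventually_elim (use t in \<open>auto simp: blinfun.scaleR_right blinfun.diff_right Tcomm\<close>)
  ultimately have L2: "((\<lambda>h. (1/h) *\<^sub>R (T h (T t y) - T t y)) \<longlongrightarrow> T t (A y)) (at_right 0)"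
    using tendsto_cong by fastforce
  then have D: "T t y \<in> D" using G by (auto simp: generator_def)
  then have "((\<lambda>h. (1/h) *\<^sub>R (T h (T t y) - T t y)) \<longlongrightarrow> A (T t y)) (at_right 0)"
    using G by (auto simp: generator_def)
  then have "A (T t y) = T t (A y)" using L2 tendsto_unique[OF trivial_limit_at_right_real] by blast
  then show ?thesis using D by blast
qed

definition gg :: "real \<Rightarrow> 'a \<Rightarrow> real \<Rightarrow> 'a" where "gg l x s = exp (- l * s) *\<^sub>R T s x"
definition FF :: "real \<Rightarrow> 'a \<Rightarrow> real \<Rightarrow> 'a" where "FF l x u = integral {0..u} (gg l x)"
definition RR :: "real \<Rightarrow> 'a \<Rightarrow> 'a" where "RR l x = FF l x 1"

lemma gg_cont: "continuous_on {0..} (gg l x)"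
  unfolding gg_def by (intro continuous_intros Tcont)

lemma gg_cont_ivl: "continuous_on {0..b} (gg l x)"
  by (rule continuous_on_subset[OF gg_cont]) auto

lemma gg_int: "gg l x integrable_on {0..b}"
  by (rule integrable_continuous_interval[OF gg_cont_ivl])

lemma RR_bl: "bounded_linear (RR l)"
proof -
  obtain M where M: "M \<ge> 1" "\<And>t. 0 \<le> t \<Longrightarrow> t \<le> 1 \<Longrightarrow> norm (T t) \<le> M" using bd[of 1] by blast
  show ?thesis
  proof (rule bounded_linear_intro)
    fix x y
    have "gg l (x + y) = (\<lambda>s. gg l x s + gg l y s)"
      by (auto simp: gg_def blinfun.add_right scaleR_add_right)
    then show "RR l (x + y) = RR l x + RR l y"
      by (simp add: RR_def FF_def integral_add[OF gg_int gg_int])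
  next
    fix r x
    have "gg l (r *\<^sub>R x) = (\<lambda>s. r *\<^sub>R gg l x s)"
      by (auto simp: gg_def blinfun.scaleR_right)
    then show "RR l (r *\<^sub>R x) = r *\<^sub>R RR l x"
      by (simp add: RR_def FF_def)
  next
    fix x
    have "norm (gg l x s) \<le> exp \<bar>l\<bar> * M * norm x" if s: "s \<in> {0..1}" for s
    proof -
      have "- l * s \<le> \<bar>l\<bar>"
      proof -
        have "- l * s \<le> \<bar>l\<bar> * s" using s by (intro mult_right_mono) auto
        also have "\<dots> \<le> \<bar>l\<bar>" using s by (simp add: mult_left_le)
        finally show ?thesis .
      qed
      then have e: "exp (- l * s) \<le> exp \<bar>l\<bar>" by simp
      have n: "norm (T s x) \<le> M * norm x"
        using norm_blinfun[of "T s" x] M(2)[of s] s by (meson atLeastAtMost_iff mult_right_mono norm_ge_zero order_trans)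
      have "norm (gg l x s) = exp (- l * s) * norm (T s x)" by (simp add: gg_def)
      also have "\<dots> \<le> exp \<bar>l\<bar> * (M * norm x)" using e n by (intro mult_mono) auto
      finally show ?thesis by simp
    qed
    then have "norm (RR l x) \<le> exp \<bar>l\<bar> * M * norm x * (1 - 0)"
      unfolding RR_def FF_def by (intro integral_bound gg_cont_ivl) auto
    then show "norm (RR l x) \<le> norm x * (exp \<bar>l\<bar> * M)" by (simp add: algebra_simps)
  qed
qed

lemma FF0: "FF l x 0 = 0"
  unfolding FF_def by simp

lemma T_RR: assumes h: "0 \<le> h"
  shows "T h (RR l x) = exp (l * h) *\<^sub>R (FF l x (1 + h) - FF l x h)"
proof -
  have "T h (RR l x) = integral {0..1} (blinfun_apply (T h) \<circ> gg l x)"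
    unfolding RR_def FF_def by (rule integral_linear[OF gg_int blinfun.bounded_linear_right, symmetric])
  also have "\<dots> = integral {0..1} (\<lambda>s. exp (l * h) *\<^sub>R (gg l x \<circ> (+) h) s)"
  proof (rule integral_cong)
    fix s :: real assume s: "s \<in> {0..1}"
    have ex: "exp (l * h) * exp (- l * (h + s)) = exp (- l * s)"
    proof -
      have "l * h + (- l * (h + s)) = - l * s" by (simp add: algebra_simps)
      then show ?thesis by (metis exp_add)
    qed
    have "(blinfun_apply (T h) \<circ> gg l x) s = exp (- l * s) *\<^sub>R T (h + s) x"
      using s h by (simp add: gg_def blinfun.scaleR_right Tadd_app)
    also have "\<dots> = exp (l * h) *\<^sub>R (gg l x \<circ> (+) h) s"
      by (simp only: gg_def o_def scaleR_scaleR ex)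
    finally show "(blinfun_apply (T h) \<circ> gg l x) s = exp (l * h) *\<^sub>R (gg l x \<circ> (+) h) s" .
  qed
  also have "\<dots> = exp (l * h) *\<^sub>R integral {h..1 + h} (gg l x)"
    using integral_shift_Icc_real[of 0 1 "gg l x" h] by (simp add: o_def)
  also have "integral {h..1 + h} (gg l x) = FF l x (1 + h) - FF l x h"
    using Henstock_Kurzweil_Integration.integral_combine[where a=0 and c=h and b="1 + h" and f="gg l x", OF h _ gg_int] by (simp add: FF_def algebra_simps)
  finally show ?thesis .
qed

lemma RR_D:
  assumes G: "generator T D A"
  shows "RR l x \<in> D \<and> A (RR l x) = l *\<^sub>R RR l x - x + exp (- l) *\<^sub>R T 1 x"
proof -
  define \<Phi> where "\<Phi> h = exp (l * h) *\<^sub>R (FF l x (1 + h) - FF l x h)" for h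
  have dF: "(FF l x has_vector_derivative gg l x u) (at u within {0..2})" if "u \<in> {0..2}" for u
    using integral_has_vector_derivative[OF gg_cont_ivl that] unfolding FF_def by (simp add: fun_eq_iff)
  have d1: "((\<lambda>h. 1 + h) has_vector_derivative 1) (at 0 within {0..1::real})"
    unfolding has_real_derivative_iff_has_vector_derivative[symmetric] by (rule derivative_eq_intros refl)+ simp
  have "(FF l x has_vector_derivative gg l x 1) (at 1 within {0..2})" by (rule dF) simp
  then have "(FF l x has_vector_derivative gg l x 1) (at ((\<lambda>h. 1 + h) 0) within (\<lambda>h. 1 + h) ` {0..1})"
    using has_vector_derivative_within_subset[of "FF l x" "gg l x 1" 1 "{0..2}" "(\<lambda>h. 1 + h) ` {0..1}"] by auto
  from vector_diff_chain_within[OF d1 this]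
  have D1: "((\<lambda>h. FF l x (1 + h)) has_vector_derivative gg l x 1) (at 0 within {0..1})"
    by (simp add: o_def)
  have D0: "(FF l x has_vector_derivative gg l x 0) (at 0 within {0..1})"
    by (rule has_vector_derivative_within_subset[OF dF]) auto
  have de: "((\<lambda>h. exp (l * h)) has_real_derivative l) (at 0 within {0..1})"
    by (rule derivative_eq_intros refl)+ simp
  have dPhi: "(\<Phi> has_vector_derivative (exp (l * 0) *\<^sub>R (gg l x 1 - gg l x 0) + l *\<^sub>R (FF l x (1 + 0) - FF l x 0)))
      (at 0 within {0..1})"
    unfolding \<Phi>_def by (intro has_vector_derivative_scaleR de has_vector_derivative_diff D1 D0)
  have "(\<Phi> has_vector_derivative (l *\<^sub>R RR l x - x + exp (- l) *\<^sub>R T 1 x)) (at 0 within {0..1})"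
  proof -
    have g1: "gg l x 1 = exp (- l) *\<^sub>R T 1 x" by (simp add: gg_def)
    have g0: "gg l x 0 = x" by (simp add: gg_def T0)
    have "exp (l * 0) *\<^sub>R (gg l x 1 - gg l x 0) + l *\<^sub>R (FF l x (1 + 0) - FF l x 0)
        = l *\<^sub>R RR l x - x + exp (- l) *\<^sub>R T 1 x"
      unfolding g1 g0 FF0 RR_def by simp
    then show ?thesis using dPhi by simp
  qed
  from vd_quot[OF this]
  have L: "((\<lambda>h. (1/h) *\<^sub>R (\<Phi> h - \<Phi> 0)) \<longlongrightarrow> l *\<^sub>R RR l x - x + exp (- l) *\<^sub>R T 1 x) (at_right 0)" .
  have P0: "\<Phi> 0 = RR l x" by (simp add: \<Phi>_def FF0 RR_def)
  have Ph: "\<Phi> h = T h (RR l x)" if "h \<ge> 0" for h using that by (simp add: \<Phi>_def T_RR)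
  have ev: "\<forall>\<^sub>F h in at_right 0. (1/h) *\<^sub>R (\<Phi> h - \<Phi> 0) = (1/h) *\<^sub>R (T h (RR l x) - RR l x)"
    using eventually_at_right_less[of "0::real"]
    by eventually_elim (simp add: P0 Ph)
  have L2: "((\<lambda>h. (1/h) *\<^sub>R (T h (RR l x) - RR l x)) \<longlongrightarrow> l *\<^sub>R RR l x - x + exp (- l) *\<^sub>R T 1 x) (at_right 0)"
    by (rule iffD1[OF tendsto_cong[OF ev] L])
  then have D: "RR l x \<in> D" using G by (auto simp: generator_def)
  have lim: "((\<lambda>h. (1/h) *\<^sub>R (T h (RR l x) - RR l x)) \<longlongrightarrow> A (RR l x)) (at_right 0)"
    using G D unfolding generator_def by blast
  have "A (RR l x) = l *\<^sub>R RR l x - x + exp (- l) *\<^sub>R T 1 x"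
    by (rule tendsto_unique[OF trivial_limit_at_right_real lim L2])
  then show ?thesis using D by blast
qed

end


theorem lemma4p11:
  fixes T :: "real \<Rightarrow> ('a::banach \<Rightarrow>\<^sub>L 'a)" and D :: "'a set" and A :: "'a \<Rightarrow> 'a"
    and \<alpha> :: real
  assumes "C0_semigroup T"
    and "generator T D A"
    and "\<forall>x\<in>D. \<exists>c. \<forall>t\<ge>0. graph_norm A (blinfun_apply (T t) x) \<le> c * exp (\<alpha> * t)"
  shows "\<exists>c. \<forall>t\<ge>0. norm (T t) \<le> c * exp (\<alpha> * t)"
proof -
  interpret sg T by (rule sg.intro) (rule assms(1))
  define l where "l = \<alpha> - 1"
  define Rb where "Rb = Blinfun (RR l)"
  have Rb: "blinfun_apply Rb x = RR l x" for x
    using RR_bl by (simp add: Rb_def bounded_linear_Blinfun_apply)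
  define Wb where "Wb = l *\<^sub>R Rb - id_blinfun + exp (- l) *\<^sub>R T 1"
  have Wb: "blinfun_apply Wb x = l *\<^sub>R RR l x - x + exp (- l) *\<^sub>R T 1 x" for x
    by (simp add: Wb_def Rb blinfun.add_left blinfun.diff_left blinfun.scaleR_left)
  have AR: "RR l x \<in> D \<and> A (RR l x) = Wb x" for x
    using RR_D[OF assms(2), of l x] Wb by simp
  have hyp: "\<exists>c. \<forall>t\<ge>0. norm (T t (RR l x)) \<le> c * exp (\<alpha> * t) \<and> norm (T t (Wb x)) \<le> c * exp (\<alpha> * t)" for x
  proof -
    obtain c where c: "\<And>t. t \<ge> 0 \<Longrightarrow> graph_norm A (T t (RR l x)) \<le> c * exp (\<alpha> * t)"
      using assms(3) AR[of x] by blast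
    have "norm (T t (RR l x)) \<le> c * exp (\<alpha> * t) \<and> norm (T t (Wb x)) \<le> c * exp (\<alpha> * t)" if t: "t \<ge> 0" for t
    proof -
      have "A (T t (RR l x)) = T t (Wb x)" using gen_comm[OF assms(2) _ t, of "RR l x"] AR[of x] by simp
      then have "norm (T t (RR l x)) + norm (T t (Wb x)) \<le> c * exp (\<alpha> * t)"
        using c[OF t] by (simp add: graph_norm_def)
      moreover have "0 \<le> norm (T t (RR l x))" "0 \<le> norm (T t (Wb x))" by simp_all
      ultimately show ?thesis by linarith
    qed
    then show ?thesis by blast
  qed
  have ub: "\<exists>C. \<forall>t\<ge>0. norm (T t o\<^sub>L B) \<le> C * exp (\<alpha> * t)"
    if pb: "\<And>x. \<exists>c. \<forall>t\<ge>0. norm (T t (blinfun_apply B x)) \<le> c * exp (\<alpha> * t)" for B :: "'a \<Rightarrow>\<^sub>L 'a"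
  proof -
    have "\<exists>c. \<forall>t\<in>{0..}. norm (blinfun_apply (exp (- \<alpha> * t) *\<^sub>R (T t o\<^sub>L B)) x) \<le> c" for x
    proof -
      obtain c where c: "\<And>t. t \<ge> 0 \<Longrightarrow> norm (T t (B x)) \<le> c * exp (\<alpha> * t)" using pb by blast
      have "norm (blinfun_apply (exp (- \<alpha> * t) *\<^sub>R (T t o\<^sub>L B)) x) \<le> c" if t: "t \<in> {0..}" for t
      proof -
        have "norm (blinfun_apply (exp (- \<alpha> * t) *\<^sub>R (T t o\<^sub>L B)) x) = exp (- \<alpha> * t) * norm (T t (B x))"
          by (simp add: blinfun.scaleR_left)
        also have "\<dots> \<le> exp (- \<alpha> * t) * (c * exp (\<alpha> * t))" using c[of t] t by (intro mult_left_mono) auto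
        also have "\<dots> = c * (exp (- \<alpha> * t) * exp (\<alpha> * t))" by simp
        also have "exp (- \<alpha> * t) * exp (\<alpha> * t) = 1" by (simp add: exp_add[symmetric])
        finally show ?thesis by simp
      qed
      then show ?thesis by blast
    qed
    then obtain C where C: "\<And>t. t \<in> {0..} \<Longrightarrow> norm (exp (- \<alpha> * t) *\<^sub>R (T t o\<^sub>L B)) \<le> C"
      using ubp[of "{0..}" "\<lambda>t. exp (- \<alpha> * t) *\<^sub>R (T t o\<^sub>L B)"] by blast
    have "norm (T t o\<^sub>L B) \<le> C * exp (\<alpha> * t)" if t: "t \<ge> 0" for t
    proof -
      have "exp (- \<alpha> * t) * norm (T t o\<^sub>L B) \<le> C" using C[of t] t by simp
      then have "exp (\<alpha> * t) * (exp (- \<alpha> * t) * norm (T t o\<^sub>L B)) \<le> exp (\<alpha> * t) * C"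
        by (intro mult_left_mono) auto
      moreover have e1: "exp (\<alpha> * t) * exp (- \<alpha> * t) = 1" by (simp add: exp_add[symmetric])
      moreover have "exp (\<alpha> * t) * (exp (- \<alpha> * t) * norm (T t o\<^sub>L B)) = norm (T t o\<^sub>L B)"
        by (metis mult.assoc mult_1 e1)
      ultimately show ?thesis by (metis mult.commute)
    qed
    then show ?thesis by blast
  qed
  have "\<exists>C. \<forall>t\<ge>0. norm (T t o\<^sub>L Rb) \<le> C * exp (\<alpha> * t)"
  proof (rule ub)
    fix x show "\<exists>c. \<forall>t\<ge>0. norm (T t (blinfun_apply Rb x)) \<le> c * exp (\<alpha> * t)"
      using hyp[of x] unfolding Rb by blast
  qed
  then obtain C1 where C1: "\<And>t. t \<ge> 0 \<Longrightarrow> norm (T t o\<^sub>L Rb) \<le> C1 * exp (\<alpha> * t)" by blast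
  have "\<exists>C. \<forall>t\<ge>0. norm (T t o\<^sub>L Wb) \<le> C * exp (\<alpha> * t)"
  proof (rule ub)
    fix x show "\<exists>c. \<forall>t\<ge>0. norm (T t (blinfun_apply Wb x)) \<le> c * exp (\<alpha> * t)"
      using hyp[of x] by blast
  qed
  then obtain C2 where C2: "\<And>t. t \<ge> 0 \<Longrightarrow> norm (T t o\<^sub>L Wb) \<le> C2 * exp (\<alpha> * t)" by blast
  have C1p: "C1 \<ge> 0"
  proof -
    have "norm (T 0 o\<^sub>L Rb) \<le> C1" using C1[of 0] by simp
    then show ?thesis by (meson norm_ge_zero order_trans)
  qed
  have C2p: "C2 \<ge> 0"
  proof -
    have "norm (T 0 o\<^sub>L Wb) \<le> C2" using C2[of 0] by simp
    then show ?thesis by (meson norm_ge_zero order_trans)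
  qed
  define K where "K = C2 + \<bar>l\<bar> * C1"
  have Kp: "K \<ge> 0" using C1p C2p by (simp add: K_def)
  have step: "norm (T (t + 1)) \<le> exp l * (K * exp (\<alpha> * t) + norm (T t))" if t: "t \<ge> 0" for t
  proof (rule norm_blinfun_bound)
    show "0 \<le> exp l * (K * exp (\<alpha> * t) + norm (T t))" using Kp by simp
    fix x
    have T1: "T 1 x = exp l *\<^sub>R (Wb x - l *\<^sub>R RR l x + x)"
    proof -
      have "exp (- l) *\<^sub>R T 1 x = Wb x - l *\<^sub>R RR l x + x" using Wb[of x] by (simp add: algebra_simps)
      then have "exp l *\<^sub>R (exp (- l) *\<^sub>R T 1 x) = exp l *\<^sub>R (Wb x - l *\<^sub>R RR l x + x)" by simp
      then show ?thesis by (simp add: exp_minus)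
    qed
    have "T (t + 1) x = T t (T 1 x)" using Tadd_app[of t 1 x] t by simp
    also have "\<dots> = exp l *\<^sub>R ((T t o\<^sub>L Wb) x - l *\<^sub>R (T t o\<^sub>L Rb) x + T t x)"
      by (simp add: T1 Rb blinfun.scaleR_right blinfun.add_right blinfun.diff_right)
    finally have eq: "T (t + 1) x = exp l *\<^sub>R ((T t o\<^sub>L Wb) x - l *\<^sub>R (T t o\<^sub>L Rb) x + T t x)" .
    have n1: "norm ((T t o\<^sub>L Wb) x) \<le> C2 * exp (\<alpha> * t) * norm x"
      by (rule order_trans[OF norm_blinfun mult_right_mono[OF C2[OF t]]]) simp
    have n2: "norm ((T t o\<^sub>L Rb) x) \<le> C1 * exp (\<alpha> * t) * norm x"
      by (rule order_trans[OF norm_blinfun mult_right_mono[OF C1[OF t]]]) simp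
    have n3: "norm (T t x) \<le> norm (T t) * norm x" by (rule norm_blinfun)
    have "norm ((T t o\<^sub>L Wb) x - l *\<^sub>R (T t o\<^sub>L Rb) x + T t x)
        \<le> norm ((T t o\<^sub>L Wb) x) + \<bar>l\<bar> * norm ((T t o\<^sub>L Rb) x) + norm (T t x)"
      by (metis (no_types, lifting) add_mono norm_scaleR norm_triangle_ineq norm_triangle_ineq4 order_trans add_right_mono)
    also have "\<dots> \<le> C2 * exp (\<alpha> * t) * norm x + \<bar>l\<bar> * (C1 * exp (\<alpha> * t) * norm x) + norm (T t) * norm x"
      using n1 n2 n3 by (intro add_mono mult_left_mono) auto
    also have "\<dots> = (K * exp (\<alpha> * t) + norm (T t)) * norm x" by (simp add: K_def algebra_simps)
    finally have "norm ((T t o\<^sub>L Wb) x - l *\<^sub>R (T t o\<^sub>L Rb) x + T t x) \<le> (K * exp (\<alpha> * t) + norm (T t)) * norm x" .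
    then show "norm (T (t + 1) x) \<le> exp l * (K * exp (\<alpha> * t) + norm (T t)) * norm x"
      unfolding eq by (simp add: mult.assoc mult_left_mono)
  qed
  obtain M where M: "M \<ge> 1" "\<And>t. 0 \<le> t \<Longrightarrow> t \<le> 1 \<Longrightarrow> norm (T t) \<le> M" using bd[of 1] by blast
  define Bd where "Bd = max (M * exp \<bar>\<alpha>\<bar>) K"
  have Bdp: "Bd \<ge> 0" using Kp by (simp add: Bd_def)
  have e2: "2 \<le> exp (1::real)" using exp_ge_add_one_self[of 1] by simp
  have ind: "\<forall>s. 0 \<le> s \<and> s \<le> 1 \<longrightarrow> norm (T (s + real n)) \<le> Bd * exp (\<alpha> * (s + real n))" for n
  proof (induction n)
    case 0
    show ?case
    proof (intro allI impI)
      fix s :: real assume s: "0 \<le> s \<and> s \<le> 1"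
      have "\<bar>\<alpha>\<bar> + \<alpha> * s \<ge> 0"
      proof (cases "\<alpha> \<ge> 0")
        case True then show ?thesis using s by simp
      next
        case False
        then have "\<alpha> * s \<ge> \<alpha> * 1" using s by (intro mult_left_mono_neg) auto
        then show ?thesis using False by simp
      qed
      then have "1 \<le> exp (\<bar>\<alpha>\<bar> + \<alpha> * s)" by simp
      then have "1 \<le> exp \<bar>\<alpha>\<bar> * exp (\<alpha> * s)" by (simp add: exp_add)
      then have "M \<le> M * (exp \<bar>\<alpha>\<bar> * exp (\<alpha> * s))" using M(1) by (metis mult_left_mono mult.right_neutral less_le_not_le zero_less_one order_trans)
      also have "\<dots> \<le> Bd * exp (\<alpha> * s)" by (simp add: Bd_def mult.assoc[symmetric])
      finally show "norm (T (s + real 0)) \<le> Bd * exp (\<alpha> * (s + real 0))" using M(2)[of s] s by simp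
    qed
  next
    case (Suc n)
    show ?case
    proof (intro allI impI)
      fix s :: real assume s: "0 \<le> s \<and> s \<le> 1"
      define u where "u = s + real n"
      have u: "u \<ge> 0" using s by (simp add: u_def)
      have IH: "norm (T u) \<le> Bd * exp (\<alpha> * u)" using Suc.IH s by (simp add: u_def)
      have "norm (T (u + 1)) \<le> exp l * (K * exp (\<alpha> * u) + norm (T u))" by (rule step[OF u])
      also have "\<dots> \<le> exp l * (Bd * exp (\<alpha> * u) + Bd * exp (\<alpha> * u))"
        using IH by (intro mult_left_mono add_mono mult_right_mono) (auto simp: Bd_def)
      also have "\<dots> = 2 * Bd * (exp l * exp (\<alpha> * u))" by simp
      also have "exp l * exp (\<alpha> * u) = exp (\<alpha> * (u + 1)) / exp 1"
        by (simp add: l_def exp_add[symmetric] exp_diff algebra_simps)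
      also have "2 * Bd * (exp (\<alpha> * (u + 1)) / exp 1) \<le> Bd * exp (\<alpha> * (u + 1))"
      proof -
        have "2 * Bd * (exp (\<alpha> * (u + 1)) / exp 1) = (Bd * exp (\<alpha> * (u + 1))) * (2 / exp 1)" by simp
        also have "\<dots> \<le> (Bd * exp (\<alpha> * (u + 1))) * 1"
          using Bdp e2 by (intro mult_left_mono) auto
        finally show ?thesis by simp
      qed
      finally have fin: "norm (T (u + 1)) \<le> Bd * exp (\<alpha> * (u + 1))" .
      have "s + real (Suc n) = u + 1" by (simp add: u_def)
      then show "norm (T (s + real (Suc n))) \<le> Bd * exp (\<alpha> * (s + real (Suc n)))"
        using fin by (simp only:)
    qed
  qed
  have "norm (T t) \<le> Bd * exp (\<alpha> * t)" if t: "t \<ge> 0" for t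
  proof -
    define n where "n = nat \<lfloor>t\<rfloor>"
    have "real n = of_int \<lfloor>t\<rfloor>" using t by (simp add: n_def)
    then have "0 \<le> t - real n" "t - real n \<le> 1" by linarith+
    then have "norm (T (t - real n + real n)) \<le> Bd * exp (\<alpha> * (t - real n + real n))"
      using ind[of n] by blast
    then show ?thesis by simp
  qed
  then show ?thesis by blast
qed


end
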